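(* For $\psi\in X_U$, let $G_\psi(u)=u-\psi(u)$, $u>0$; then $G_\psi$ is a bijection $(0,\infty)\to\mathbb R$, and setting $$\Phi_U(\psi)(v)=\frac{-\psi'(G_\psi^{-1}(v))}{1-\psi'(G_\psi^{-1}(v))},\qquad v\in\mathbb R,$$ the map $\Phi_U$ is a bijection from $X_U$ onto $Y_U$. Its inverse is $\Psi_U(\rho)(u)=\zeta^+_\rho\big((\zeta^-_\rho)^{-1}(u)\big)$, $u>0$, where $\zeta^-_\rho(v)=\int_{-\infty}^v(1-\rho(v'))dv'$ and $\zeta^+_\rho(v)=\int_v^\infty\rho(v')dv'$ (both bijections $\mathbb R\to(0,\infty)$).
   Context: $X_U$ is the set of $C^1$ functions $\psi:(0,\infty)\to(0,\infty)$ with $\psi'<0$, $\lim_{u\downarrow0}\psi(u)=\infty$, $\lim_{u\uparrow\infty}\psi(u)=0$. $Y_U$ is the set of continuous $\rho:\mathbb R\to(0,1)$ with $\int_{-\infty}^0(1-\rho(v))dv=\int_0^\infty\rho(v)dv<\infty$. *)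

theory Defs
  imports "HOL-Analysis.Analysis"
begin

text \<open>Functions on (0,oo) are represented as total functions real => real,
  normalised (extensional convention) to take the value 0 outside (0,oo).\<close>

definition X_U :: "(real \<Rightarrow> real) set" where
  "X_U = {\<psi>. (\<exists>\<psi>'. (\<forall>u>0. (\<psi> has_real_derivative \<psi>' u) (at u))
                     \<and> continuous_on {0<..} \<psi>'
                     \<and> (\<forall>u>0. \<psi>' u < 0))
            \<and> (\<forall>u>0. \<psi> u > 0)
            \<and> filterlim \<psi> at_top (at_right 0)
            \<and> (\<psi> \<longlongrightarrow> 0) at_top
            \<and> (\<forall>u\<le>0. \<psi> u = 0)}"

definition Y_U :: "(real \<Rightarrow> real) set" where
  "Y_U = {\<rho>. continuous_on UNIV \<rho>
            \<and> (\<forall>v. 0 < \<rho> v \<and> \<rho> v < 1)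
            \<and> set_integrable lborel {..0} (\<lambda>v. 1 - \<rho> v)
            \<and> set_integrable lborel {0..} \<rho>
            \<and> (LINT v:{..0}|lborel. 1 - \<rho> v) = (LINT v:{0..}|lborel. \<rho> v)}"

definition G :: "(real \<Rightarrow> real) \<Rightarrow> real \<Rightarrow> real" where
  "G \<psi> u = u - \<psi> u"

definition Phi_U :: "(real \<Rightarrow> real) \<Rightarrow> real \<Rightarrow> real" where
  "Phi_U \<psi> v = (let w = the_inv_into {0<..} (G \<psi>) v
                 in - deriv \<psi> w / (1 - deriv \<psi> w))"

definition zeta_minus :: "(real \<Rightarrow> real) \<Rightarrow> real \<Rightarrow> real" where
  "zeta_minus \<rho> v = (LINT v':{..v}|lborel. 1 - \<rho> v')"

definition zeta_plus :: "(real \<Rightarrow> real) \<Rightarrow> real \<Rightarrow> real" where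
  "zeta_plus \<rho> v = (LINT v':{v..}|lborel. \<rho> v')"

definition Psi_U :: "(real \<Rightarrow> real) \<Rightarrow> real \<Rightarrow> real" where
  "Psi_U \<rho> u = (if u > 0 then zeta_plus \<rho> (the_inv_into UNIV (zeta_minus \<rho>) u) else 0)"

end

theory Submission
  imports Defs
begin


lemma Iic_Iio_swap:
  fixes f :: "real \<Rightarrow> real"
  assumes "continuous_on UNIV f"
  shows "set_integrable lborel {..v} f = set_integrable lborel {..<v} f"
    and "(LINT x:{..v}|lborel. f x) = (LINT x:{..<v}|lborel. f x)"
proof -
  have m: "f \<in> borel_measurable lborel" using borel_measurable_continuous_onI[OF assms] by simp
  have ae: "AE x in lborel. indicator {..v} x *\<^sub>R f x = indicator {..<v} x *\<^sub>R f x"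
    using AE_lborel_singleton[of v] by eventually_elim (auto split: split_indicator)
  show "set_integrable lborel {..v} f = set_integrable lborel {..<v} f"
    unfolding set_integrable_def using m ae by (intro integrable_cong_AE) auto
  show "(LINT x:{..v}|lborel. f x) = (LINT x:{..<v}|lborel. f x)"
    unfolding set_lebesgue_integral_def using m ae by (intro integral_cong_AE) auto
qed

lemma Ici_Ioi_swap:
  fixes f :: "real \<Rightarrow> real"
  assumes "continuous_on UNIV f"
  shows "set_integrable lborel {v..} f = set_integrable lborel {v<..} f"
    and "(LINT x:{v..}|lborel. f x) = (LINT x:{v<..}|lborel. f x)"
proof -
  have m: "f \<in> borel_measurable lborel" using borel_measurable_continuous_onI[OF assms] by simp
  have ae: "AE x in lborel. indicator {v..} x *\<^sub>R f x = indicator {v<..} x *\<^sub>R f x"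
    using AE_lborel_singleton[of v] by eventually_elim (auto split: split_indicator)
  show "set_integrable lborel {v..} f = set_integrable lborel {v<..} f"
    unfolding set_integrable_def using m ae by (intro integrable_cong_AE) auto
  show "(LINT x:{v..}|lborel. f x) = (LINT x:{v<..}|lborel. f x)"
    unfolding set_lebesgue_integral_def using m ae by (intro integral_cong_AE) auto
qed

lemma FTC_left:
  fixes f F :: "real \<Rightarrow> real"
  assumes cont: "continuous_on UNIV f" and D: "\<And>x. x < v \<Longrightarrow> DERIV F x :> f x"
    and nn: "\<And>x. x < v \<Longrightarrow> 0 \<le> f x" and A: "(F \<longlongrightarrow> A) at_bot"
    and B: "(F \<longlongrightarrow> F v) (at_left v)"
  shows "set_integrable lborel {..v} f \<and> (LINT x:{..v}|lborel. f x) = F v - A"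
proof -
  have ic: "isCont f x" for x using cont by (simp add: continuous_on_eq_continuous_at)
  have lt: "-\<infinity> < ereal v" by simp
  note r = interval_integral_FTC_nonneg[OF lt, of F f A "F v"]
  have h1: "\<And>x. - \<infinity> < ereal x \<Longrightarrow> ereal x < ereal v \<Longrightarrow> DERIV F x :> f x" using D by simp
  have h2: "AE x in lborel. - \<infinity> < ereal x \<longrightarrow> ereal x < ereal v \<longrightarrow> 0 \<le> f x" using nn by simp
  have h3: "((F \<circ> real_of_ereal) \<longlongrightarrow> A) (at_right (- \<infinity>))" using A by (simp add: ereal_tendsto_simps1)
  have h4: "((F \<circ> real_of_ereal) \<longlongrightarrow> F v) (at_left (ereal v))" using B by (simp add: ereal_tendsto_simps1)
  from r[OF h1 ic h2 h3 h4] have "set_integrable lborel {..<v} f" "(LINT x:{..<v}|lborel. f x) = F v - A"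
    by (auto simp: interval_lebesgue_integral_def)
  thus ?thesis using Iic_Iio_swap[OF cont] by simp
qed

lemma FTC_right:
  fixes f F :: "real \<Rightarrow> real"
  assumes cont: "continuous_on UNIV f" and D: "\<And>x. v < x \<Longrightarrow> DERIV F x :> f x"
    and nn: "\<And>x. v < x \<Longrightarrow> 0 \<le> f x" and B: "(F \<longlongrightarrow> B) at_top"
    and A: "(F \<longlongrightarrow> F v) (at_right v)"
  shows "set_integrable lborel {v..} f \<and> (LINT x:{v..}|lborel. f x) = B - F v"
proof -
  have ic: "isCont f x" for x using cont by (simp add: continuous_on_eq_continuous_at)
  have lt: "ereal v < \<infinity>" by simp
  note r = interval_integral_FTC_nonneg[OF lt, of F f "F v" B]
  have h1: "\<And>x. ereal v < ereal x \<Longrightarrow> ereal x < \<infinity> \<Longrightarrow> DERIV F x :> f x" using D by simp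
  have h2: "AE x in lborel. ereal v < ereal x \<longrightarrow> ereal x < \<infinity> \<longrightarrow> 0 \<le> f x" using nn by simp
  have h3: "((F \<circ> real_of_ereal) \<longlongrightarrow> B) (at_left \<infinity>)" using B by (simp add: ereal_tendsto_simps1)
  have h4: "((F \<circ> real_of_ereal) \<longlongrightarrow> F v) (at_right (ereal v))" using A by (simp add: ereal_tendsto_simps1)
  from r[OF h1 ic h2 h4 h3] have "set_integrable lborel {v<..} f" "(LINT x:{v<..}|lborel. f x) = B - F v"
    by (auto simp: interval_lebesgue_integral_def)
  thus ?thesis using Ici_Ioi_swap[OF cont] by simp
qed




lemma antideriv_UNIV:
  fixes f :: "real \<Rightarrow> real"
  assumes cont: "continuous_on UNIV f"
  obtains F where "\<And>x. DERIV F x :> f x"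
proof -
  have ic: "isCont f x" for x using cont by (simp add: continuous_on_eq_continuous_at)
  obtain F where "\<forall>x::real. -\<infinity> < x \<longrightarrow> x < \<infinity> \<longrightarrow> (F has_vector_derivative f x) (at x)"
    using einterval_antiderivative[of "-\<infinity>" "\<infinity>" f] ic by auto
  then have "\<And>x. DERIV F x :> f x" by (simp add: has_real_derivative_iff_has_vector_derivative)
  then show ?thesis using that by blast
qed

lemma FTC_Icc:
  fixes f F :: "real \<Rightarrow> real"
  assumes cont: "continuous_on UNIV f" and D: "\<And>x. DERIV F x :> f x" and "a \<le> b"
  shows "(LINT x:{a..b}|lborel. f x) = F b - F a"
  unfolding set_lebesgue_integral_def
  by (rule integral_FTC_atLeastAtMost[OF \<open>a \<le> b\<close>])
     (auto intro: DERIV_subset[OF D] continuous_on_subset[OF cont]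
       simp: has_real_derivative_iff_has_vector_derivative[symmetric])

lemma left_tail:
  fixes f :: "real \<Rightarrow> real"
  assumes cont: "continuous_on UNIV f" and int: "set_integrable lborel {..0} f"
  shows "\<exists>F L. (\<forall>x. DERIV F x :> f x) \<and> (F \<longlongrightarrow> L) at_bot \<and>
     (\<forall>v. set_integrable lborel {..v} f \<and> (LINT x:{..v}|lborel. f x) = F v - L)"
proof -
  obtain F where D: "\<And>x. DERIV F x :> f x" using antideriv_UNIV[OF cont] by blast
  have intv: "set_integrable lborel {..v} f" for v
  proof (cases "v \<le> 0")
    case True thus ?thesis by (intro set_integrable_subset[OF int]) auto
  next
    case False
    have "{..v} = {..0} \<union> {0..v}" using False by auto
    moreover have "set_integrable lborel {0..v} f"
      by (rule borel_integrable_atLeastAtMost') (rule continuous_on_subset[OF cont], auto)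
    ultimately show ?thesis using int by (auto intro: set_integrable_Un)
  qed
  have lim: "(F \<longlongrightarrow> F b - (LINT x:{..b}|lborel. f x)) at_bot" for b
  proof -
    have "((\<lambda>a. LINT x:{a..b}|lborel. f x) \<longlongrightarrow> (LINT x:{..b}|lborel. f x)) at_bot"
      by (rule tendsto_set_lebesgue_integral_at_bot) (auto intro: intv)
    then have "((\<lambda>a. F b - (LINT x:{a..b}|lborel. f x)) \<longlongrightarrow> F b - (LINT x:{..b}|lborel. f x)) at_bot"
      by (intro tendsto_intros)
    moreover have "eventually (\<lambda>a. F b - (LINT x:{a..b}|lborel. f x) = F a) at_bot"
      using eventually_le_at_bot[of b] by eventually_elim (simp add: FTC_Icc[OF cont D])
    ultimately show ?thesis by (rule Lim_transform_eventually)
  qed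
  define L where "L = F 0 - (LINT x:{..0}|lborel. f x)"
  have "F v - (LINT x:{..v}|lborel. f x) = L" for v
    unfolding L_def by (rule tendsto_unique[OF _ lim lim]) simp
  then show ?thesis using D lim[of 0] intv unfolding L_def[symmetric]
    by (intro exI[of _ F] exI[of _ L]) (auto simp: algebra_simps)
qed

lemma right_tail:
  fixes f :: "real \<Rightarrow> real"
  assumes cont: "continuous_on UNIV f" and int: "set_integrable lborel {0..} f"
  shows "\<exists>F R. (\<forall>x. DERIV F x :> f x) \<and> (F \<longlongrightarrow> R) at_top \<and>
     (\<forall>v. set_integrable lborel {v..} f \<and> (LINT x:{v..}|lborel. f x) = R - F v)"
proof -
  obtain F where D: "\<And>x. DERIV F x :> f x" using antideriv_UNIV[OF cont] by blast
  have intv: "set_integrable lborel {v..} f" for v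
  proof (cases "0 \<le> v")
    case True thus ?thesis by (intro set_integrable_subset[OF int]) auto
  next
    case False
    have "{v..} = {v..0} \<union> {0..}" using False by auto
    moreover have "set_integrable lborel {v..0} f"
      by (rule borel_integrable_atLeastAtMost') (rule continuous_on_subset[OF cont], auto)
    ultimately show ?thesis using int by (auto intro: set_integrable_Un)
  qed
  have lim: "(F \<longlongrightarrow> F a + (LINT x:{a..}|lborel. f x)) at_top" for a
  proof -
    have "((\<lambda>b. LINT x:{a..b}|lborel. f x) \<longlongrightarrow> (LINT x:{a..}|lborel. f x)) at_top"
      by (rule tendsto_set_lebesgue_integral_at_top) (auto intro: intv)
    then have "((\<lambda>b. F a + (LINT x:{a..b}|lborel. f x)) \<longlongrightarrow> F a + (LINT x:{a..}|lborel. f x)) at_top"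
      by (intro tendsto_intros)
    moreover have "eventually (\<lambda>b. F a + (LINT x:{a..b}|lborel. f x) = F b) at_top"
      using eventually_ge_at_top[of a] by eventually_elim (simp add: FTC_Icc[OF cont D])
    ultimately show ?thesis by (rule Lim_transform_eventually)
  qed
  define R where "R = F 0 + (LINT x:{0..}|lborel. f x)"
  have "F v + (LINT x:{v..}|lborel. f x) = R" for v
    unfolding R_def by (rule tendsto_unique[OF _ lim lim]) simp
  then show ?thesis using D lim[of 0] intv unfolding R_def[symmetric]
    by (intro exI[of _ F] exI[of _ R]) (auto simp: algebra_simps)
qed




lemma bij_pos:
  fixes f :: "real \<Rightarrow> real"
  assumes cont: "\<And>x. isCont f x" and inj: "inj f" and pos: "\<And>x. f x > 0"
    and ex: "\<And>u. u > 0 \<Longrightarrow> \<exists>a b. f a \<le> u \<and> u \<le> f b"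
  shows "bij_betw f UNIV {0<..}"
  unfolding bij_betw_def
proof (intro conjI inj subset_antisym)
  show "range f \<subseteq> {0<..}" using pos by auto
  show "{0<..} \<subseteq> range f"
  proof
    fix u :: real assume "u \<in> {0<..}"
    then have "u > 0" by simp
    then obtain a b where ab: "f a \<le> u" "u \<le> f b" using ex by blast
    show "u \<in> range f"
    proof (cases "a \<le> b")
      case True
      from IVT[of f a u b] ab True cont show ?thesis by auto
    next
      case False
      from IVT2[of f a u b] ab False cont show ?thesis by auto
    qed
  qed
qed

context
  fixes \<rho> :: "real \<Rightarrow> real"
  assumes Y: "\<rho> \<in> Y_U"
begin

lemma Y_cont: "continuous_on UNIV \<rho>" using Y by (simp add: Y_U_def)
lemma Y_bounds: "0 < \<rho> v" "\<rho> v < 1" using Y by (auto simp: Y_U_def)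
lemma Y_isCont: "isCont \<rho> x" using Y_cont by (simp add: continuous_on_eq_continuous_at)

lemma Y_repr:
  obtains Fm L Fp R where
    "\<And>x. DERIV Fm x :> 1 - \<rho> x" "(Fm \<longlongrightarrow> L) at_bot" "\<And>v. zeta_minus \<rho> v = Fm v - L"
    "\<And>x. DERIV Fp x :> \<rho> x" "(Fp \<longlongrightarrow> R) at_top" "\<And>v. zeta_plus \<rho> v = R - Fp v"
proof -
  have c1: "continuous_on UNIV (\<lambda>v. 1 - \<rho> v)" using Y_cont by (intro continuous_intros)
  have i1: "set_integrable lborel {..0} (\<lambda>v. 1 - \<rho> v)" and i2: "set_integrable lborel {0..} \<rho>"
    using Y by (auto simp: Y_U_def)
  obtain Fm L where A: "\<forall>x. DERIV Fm x :> 1 - \<rho> x" "(Fm \<longlongrightarrow> L) at_bot"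
     "\<forall>v. set_integrable lborel {..v} (\<lambda>v. 1 - \<rho> v) \<and> (LINT x:{..v}|lborel. 1 - \<rho> x) = Fm v - L"
    using left_tail[OF c1 i1] by blast
  obtain Fp R where B: "\<forall>x. DERIV Fp x :> \<rho> x" "(Fp \<longlongrightarrow> R) at_top"
     "\<forall>v. set_integrable lborel {v..} \<rho> \<and> (LINT x:{v..}|lborel. \<rho> x) = R - Fp v"
    using right_tail[OF Y_cont i2] by blast
  show ?thesis using that[of Fm L Fp R] A B by (simp add: zeta_minus_def zeta_plus_def)
qed

lemma zdiff: "zeta_minus \<rho> v - zeta_plus \<rho> v = v"
proof -
  obtain Fm L Fp R where r:
    "\<And>x. DERIV Fm x :> 1 - \<rho> x" "(Fm \<longlongrightarrow> L) at_bot" "\<And>v. zeta_minus \<rho> v = Fm v - L"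
    "\<And>x. DERIV Fp x :> \<rho> x" "(Fp \<longlongrightarrow> R) at_top" "\<And>v. zeta_plus \<rho> v = R - Fp v"
    using Y_repr by blast
  have "\<forall>x. DERIV (\<lambda>x. Fm x + Fp x - x) x :> 0"
  proof
    fix x
    have "DERIV (\<lambda>x. Fm x + Fp x - x) x :> (1 - \<rho> x) + \<rho> x - 1"
      by (intro derivative_intros r)
    thus "DERIV (\<lambda>x. Fm x + Fp x - x) x :> 0" by simp
  qed
  from DERIV_isconst_all[OF this, of v 0] have e: "Fm v + Fp v - v = Fm 0 + Fp 0" by simp
  have "zeta_minus \<rho> 0 = zeta_plus \<rho> 0" using Y by (simp add: Y_U_def zeta_minus_def zeta_plus_def)
  with e show ?thesis by (simp add: r)
qed

lemma zm_deriv: "DERIV (zeta_minus \<rho>) x :> 1 - \<rho> x"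
proof -
  obtain Fm L Fp R where r:
    "\<And>x. DERIV Fm x :> 1 - \<rho> x" "(Fm \<longlongrightarrow> L) at_bot" "\<And>v. zeta_minus \<rho> v = Fm v - L"
    "\<And>x. DERIV Fp x :> \<rho> x" "(Fp \<longlongrightarrow> R) at_top" "\<And>v. zeta_plus \<rho> v = R - Fp v"
    using Y_repr by blast
  have "DERIV (\<lambda>x. Fm x - L) x :> 1 - \<rho> x - 0" by (intro derivative_intros r)
  then show ?thesis by (simp add: r(3)[abs_def])
qed

lemma zp_deriv: "DERIV (zeta_plus \<rho>) x :> - \<rho> x"
proof -
  obtain Fm L Fp R where r:
    "\<And>x. DERIV Fm x :> 1 - \<rho> x" "(Fm \<longlongrightarrow> L) at_bot" "\<And>v. zeta_minus \<rho> v = Fm v - L"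
    "\<And>x. DERIV Fp x :> \<rho> x" "(Fp \<longlongrightarrow> R) at_top" "\<And>v. zeta_plus \<rho> v = R - Fp v"
    using Y_repr by blast
  have "DERIV (\<lambda>x. R - Fp x) x :> 0 - \<rho> x" by (intro derivative_intros r)
  then show ?thesis by (simp add: r(6)[abs_def])
qed

lemma zm_lim: "(zeta_minus \<rho> \<longlongrightarrow> 0) at_bot"
proof -
  obtain Fm L Fp R where r:
    "\<And>x. DERIV Fm x :> 1 - \<rho> x" "(Fm \<longlongrightarrow> L) at_bot" "\<And>v. zeta_minus \<rho> v = Fm v - L"
    "\<And>x. DERIV Fp x :> \<rho> x" "(Fp \<longlongrightarrow> R) at_top" "\<And>v. zeta_plus \<rho> v = R - Fp v"
    using Y_repr by blast
  have "((\<lambda>x. Fm x - L) \<longlongrightarrow> L - L) at_bot" by (intro tendsto_intros r)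
  then show ?thesis by (simp add: r(3)[abs_def])
qed

lemma zp_lim: "(zeta_plus \<rho> \<longlongrightarrow> 0) at_top"
proof -
  obtain Fm L Fp R where r:
    "\<And>x. DERIV Fm x :> 1 - \<rho> x" "(Fm \<longlongrightarrow> L) at_bot" "\<And>v. zeta_minus \<rho> v = Fm v - L"
    "\<And>x. DERIV Fp x :> \<rho> x" "(Fp \<longlongrightarrow> R) at_top" "\<And>v. zeta_plus \<rho> v = R - Fp v"
    using Y_repr by blast
  have "((\<lambda>x. R - Fp x) \<longlongrightarrow> R - R) at_top" by (intro tendsto_intros r)
  then show ?thesis by (simp add: r(6)[abs_def])
qed

lemma zm_mono: "a < b \<Longrightarrow> zeta_minus \<rho> a < zeta_minus \<rho> b"
proof (rule DERIV_pos_imp_increasing[where f="zeta_minus \<rho>"])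
  fix x show "\<exists>y. DERIV (zeta_minus \<rho>) x :> y \<and> y > 0"
    using zm_deriv[of x] Y_bounds(2)[of x] by (intro exI[of _ "1 - \<rho> x"]) simp
qed

lemma zp_mono: "a < b \<Longrightarrow> zeta_plus \<rho> a > zeta_plus \<rho> b"
proof (rule DERIV_neg_imp_decreasing[where f="zeta_plus \<rho>"])
  fix x show "\<exists>y. DERIV (zeta_plus \<rho>) x :> y \<and> y < 0"
    using zp_deriv[of x] Y_bounds(1)[of x] by (intro exI[of _ "- \<rho> x"]) simp
qed

lemma zm_pos: "zeta_minus \<rho> v > 0"
proof -
  have "0 \<le> zeta_minus \<rho> (v - 1)"
    by (rule tendsto_upperbound[OF zm_lim])
       (use eventually_le_at_bot[of "v - 1"] in \<open>auto elim!: eventually_mono intro: less_imp_le zm_mono simp: le_less\<close>)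
  also have "\<dots> < zeta_minus \<rho> v" by (rule zm_mono) simp
  finally show ?thesis .
qed

lemma zp_pos: "zeta_plus \<rho> v > 0"
proof -
  have "0 \<le> zeta_plus \<rho> (v + 1)"
    by (rule tendsto_upperbound[OF zp_lim])
       (use eventually_ge_at_top[of "v + 1"] in \<open>auto elim!: eventually_mono intro: less_imp_le zp_mono simp: le_less\<close>)
  also have "\<dots> < zeta_plus \<rho> v" by (rule zp_mono) simp
  finally show ?thesis .
qed

lemma zm_bij: "bij_betw (zeta_minus \<rho>) UNIV {0<..}"
proof (rule bij_pos)
  show "isCont (zeta_minus \<rho>) x" for x using zm_deriv by (rule DERIV_isCont)
  show "inj (zeta_minus \<rho>)"
    by (rule injI) (metis less_irrefl linorder_neqE zm_mono)
  show "zeta_minus \<rho> x > 0" for x by (rule zm_pos)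
  fix u :: real assume u: "u > 0"
  from order_tendstoD(2)[OF zm_lim u] obtain a where "zeta_minus \<rho> a < u"
    by (auto simp: eventually_at_bot_linorder)
  moreover have "u \<le> zeta_minus \<rho> u" using zdiff[of u] zp_pos[of u] by linarith
  ultimately show "\<exists>a b. zeta_minus \<rho> a \<le> u \<and> u \<le> zeta_minus \<rho> b" by (meson less_imp_le)
qed

lemma zp_bij: "bij_betw (zeta_plus \<rho>) UNIV {0<..}"
proof (rule bij_pos)
  show "isCont (zeta_plus \<rho>) x" for x using zp_deriv by (rule DERIV_isCont)
  show "inj (zeta_plus \<rho>)"
    by (rule injI) (metis less_irrefl linorder_neqE zp_mono)
  show "zeta_plus \<rho> x > 0" for x by (rule zp_pos)
  fix u :: real assume u: "u > 0"
  from order_tendstoD(2)[OF zp_lim u] obtain a where "zeta_plus \<rho> a < u"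
    by (auto simp: eventually_at_top_linorder)
  moreover have "u \<le> zeta_plus \<rho> (-u)" using zdiff[of "-u"] zm_pos[of "-u"] by linarith
  ultimately show "\<exists>a b. zeta_plus \<rho> a \<le> u \<and> u \<le> zeta_plus \<rho> b" by (meson less_imp_le)
qed


definition kinv :: "real \<Rightarrow> real" where "kinv = the_inv_into UNIV (zeta_minus \<rho>)"

lemma zm_inj: "inj (zeta_minus \<rho>)" using zm_bij by (simp add: bij_betw_def)

lemma zm_k: "u > 0 \<Longrightarrow> zeta_minus \<rho> (kinv u) = u"
  unfolding kinv_def using zm_bij by (intro f_the_inv_into_f) (auto simp: bij_betw_def)

lemma k_zm: "kinv (zeta_minus \<rho> v) = v"
  unfolding kinv_def using zm_inj by (rule the_inv_into_f_f) simp

lemma Psi_pos: "u > 0 \<Longrightarrow> Psi_U \<rho> u = u - kinv u"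
  using zdiff[of "kinv u"] zm_k[of u] by (simp add: Psi_U_def kinv_def[symmetric])

lemma k_isCont: "u > 0 \<Longrightarrow> isCont kinv u"
  using isCont_inverse_function[of 1 "kinv u" kinv "zeta_minus \<rho>"] k_zm zm_k[of u]
    DERIV_isCont[OF zm_deriv] by simp

lemma k_deriv: "u > 0 \<Longrightarrow> DERIV kinv u :> inverse (1 - \<rho> (kinv u))"
  by (rule DERIV_inverse_function[where f="zeta_minus \<rho>" and a=0 and b="u+1"])
     (use zm_deriv Y_bounds(2)[of "kinv u"] zm_k k_isCont in auto)

definition psid :: "real \<Rightarrow> real" where "psid u = - \<rho> (kinv u) / (1 - \<rho> (kinv u))"

lemma Psi_deriv: "u > 0 \<Longrightarrow> DERIV (Psi_U \<rho>) u :> psid u"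
proof -
  assume u: "u > 0"
  have "DERIV (\<lambda>u. u - kinv u) u :> 1 - inverse (1 - \<rho> (kinv u))"
    by (intro derivative_intros k_deriv u)
  moreover have "1 - inverse (1 - \<rho> (kinv u)) = psid u"
    using Y_bounds(2)[of "kinv u"] by (simp add: psid_def field_simps)
  ultimately have "DERIV (\<lambda>u. u - kinv u) u :> psid u" by simp
  then show ?thesis
    by (rule has_field_derivative_transform_within_open[where S="{0<..}"])
       (use u Psi_pos in auto)
qed

lemma k_mono: "0 < a \<Longrightarrow> a < b \<Longrightarrow> kinv a < kinv b"
  by (metis linorder_not_le order_le_less_trans order_less_imp_le zm_k zm_mono less_le)

lemma k_bot: "filterlim kinv at_bot (at_right 0)"
  unfolding filterlim_at_bot
proof
  fix Z :: real
  have "eventually (\<lambda>u. u < zeta_minus \<rho> Z) (at_right 0)"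
    using zm_pos[of Z] by (auto simp: eventually_at_right_field intro!: exI[of _ "zeta_minus \<rho> Z"])
  then show "eventually (\<lambda>u. kinv u \<le> Z) (at_right 0)"
    using eventually_at_right_less[of 0]
  proof eventually_elim
    case (elim u)
    show ?case
    proof (rule ccontr)
      assume "\<not> kinv u \<le> Z"
      then have "zeta_minus \<rho> Z < zeta_minus \<rho> (kinv u)" by (intro zm_mono) simp
      with elim zm_k[of u] show False by simp
    qed
  qed
qed

lemma k_top: "filterlim kinv at_top at_top"
  unfolding filterlim_at_top
proof
  fix Z :: real
  show "eventually (\<lambda>u. Z \<le> kinv u) at_top"
    using eventually_ge_at_top[of "zeta_minus \<rho> Z"]
  proof eventually_elim
    case (elim u)
    have u: "u > 0" using elim zm_pos[of Z] by linarith
    show ?case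
    proof (rule ccontr)
      assume "\<not> Z \<le> kinv u"
      then have "zeta_minus \<rho> (kinv u) < zeta_minus \<rho> Z" by (intro zm_mono) simp
      with elim zm_k[OF u] show False by simp
    qed
  qed
qed

lemma zp_bot: "filterlim (zeta_plus \<rho>) at_top at_bot"
proof -
  have "filterlim (\<lambda>v::real. - v) at_top at_bot" by (rule filterlim_uminus_at_top_at_bot)
  moreover have "\<forall>\<^sub>F v in at_bot. - v \<le> zeta_plus \<rho> v"
    using zdiff zm_pos by (auto intro!: always_eventually) (smt (verit))
  ultimately show ?thesis by (rule filterlim_at_top_mono)
qed

lemma Psi_in_X: "Psi_U \<rho> \<in> X_U"
  unfolding X_U_def
proof (intro CollectI conjI)
  show "\<exists>\<psi>'. (\<forall>u>0. (Psi_U \<rho> has_real_derivative \<psi>' u) (at u)) \<and>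
          continuous_on {0<..} \<psi>' \<and> (\<forall>u>0. \<psi>' u < 0)"
  proof (intro exI[of _ psid] conjI allI impI)
    show "DERIV (Psi_U \<rho>) u :> psid u" if "u > 0" for u using Psi_deriv that .
    show "psid u < 0" if "u > 0" for u
      using Y_bounds[of "kinv u"] by (simp add: psid_def divide_neg_pos)
    have ck: "continuous_on {0<..} kinv"
      by (intro continuous_at_imp_continuous_on ballI k_isCont) auto
    have "continuous_on {0<..} (\<lambda>u. \<rho> (kinv u))"
      by (rule continuous_on_compose2[OF Y_cont ck]) auto
    then show "continuous_on {0<..} psid"
      unfolding psid_def using Y_bounds(2)
      by (intro continuous_intros) (auto simp: less_le)
  qed
  show "\<forall>u>0. Psi_U \<rho> u > 0" using Psi_U_def zp_pos by simp
  have ev1: "eventually (\<lambda>u. zeta_plus \<rho> (kinv u) = Psi_U \<rho> u) (at_right 0)"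
    using eventually_at_right_less[of 0] by eventually_elim (simp add: Psi_U_def kinv_def)
  show "filterlim (Psi_U \<rho>) at_top (at_right 0)"
    using filterlim_compose[OF zp_bot k_bot] filterlim_cong[OF refl refl ev1] by simp
  have ev2: "eventually (\<lambda>u. zeta_plus \<rho> (kinv u) = Psi_U \<rho> u) at_top"
    using eventually_gt_at_top[of 0] by eventually_elim (simp add: Psi_U_def kinv_def)
  show "(Psi_U \<rho> \<longlongrightarrow> 0) at_top"
    using filterlim_compose[OF zp_lim k_top] filterlim_cong[OF refl refl ev2] by simp
  show "\<forall>u\<le>0. Psi_U \<rho> u = 0" by (simp add: Psi_U_def)
qed

lemma Phi_Psi: "Phi_U (Psi_U \<rho>) = \<rho>"
proof
  fix v
  have Gk: "G (Psi_U \<rho>) u = kinv u" if "u > 0" for u using Psi_pos[OF that] by (simp add: G_def)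
  have inj: "inj_on (G (Psi_U \<rho>)) {0<..}"
    by (rule inj_onI) (metis Gk greaterThan_iff zm_k)
  have w: "the_inv_into {0<..} (G (Psi_U \<rho>)) v = zeta_minus \<rho> v"
    by (rule the_inv_into_f_eq[OF inj]) (use Gk zm_pos k_zm in auto)
  have d: "deriv (Psi_U \<rho>) (zeta_minus \<rho> v) = psid (zeta_minus \<rho> v)"
    by (rule DERIV_imp_deriv[OF Psi_deriv[OF zm_pos]])
  show "Phi_U (Psi_U \<rho>) v = \<rho> v"
    unfolding Phi_U_def Let_def w d psid_def k_zm
    using Y_bounds[of v] by (simp add: field_simps)
qed

end



context
  fixes \<psi> :: "real \<Rightarrow> real"
  assumes X: "\<psi> \<in> X_U"
begin

definition psd :: "real \<Rightarrow> real" where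
  "psd = (SOME d. (\<forall>u>0. DERIV \<psi> u :> d u) \<and> continuous_on {0<..} d \<and> (\<forall>u>0. d u < 0))"

lemma psd_props: "(\<forall>u>0. DERIV \<psi> u :> psd u) \<and> continuous_on {0<..} psd \<and> (\<forall>u>0. psd u < 0)"
proof -
  have "\<exists>d. (\<forall>u>0. DERIV \<psi> u :> d u) \<and> continuous_on {0<..} d \<and> (\<forall>u>0. d u < 0)"
    using X by (simp add: X_U_def)
  then show ?thesis unfolding psd_def by (rule someI_ex)
qed

lemma psd_deriv: "u > 0 \<Longrightarrow> DERIV \<psi> u :> psd u" using psd_props by blast
lemma psd_cont: "continuous_on {0<..} psd" using psd_props by blast
lemma psd_neg: "u > 0 \<Longrightarrow> psd u < 0" using psd_props by blast
lemma X_pos: "u > 0 \<Longrightarrow> \<psi> u > 0" using X by (simp add: X_U_def)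
lemma X_lim0: "filterlim \<psi> at_top (at_right 0)" using X by (simp add: X_U_def)
lemma X_liminf: "(\<psi> \<longlongrightarrow> 0) at_top" using X by (simp add: X_U_def)
lemma X_zero: "u \<le> 0 \<Longrightarrow> \<psi> u = 0" using X by (simp add: X_U_def)

lemma G_deriv: "u > 0 \<Longrightarrow> DERIV (G \<psi>) u :> 1 - psd u"
  unfolding G_def[abs_def] by (intro derivative_intros psd_deriv)

lemma G_isCont: "u > 0 \<Longrightarrow> isCont (G \<psi>) u" using G_deriv by (rule DERIV_isCont)

lemma G_mono: "0 < a \<Longrightarrow> a < b \<Longrightarrow> G \<psi> a < G \<psi> b"
proof (rule DERIV_pos_imp_increasing[where f="G \<psi>"])
  fix x assume "0 < a" "a \<le> x"
  then have "x > 0" by simp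
  then show "\<exists>y. DERIV (G \<psi>) x :> y \<and> y > 0"
    using G_deriv[of x] psd_neg[of x] by (intro exI[of _ "1 - psd x"]) simp
qed

lemma G_mono_le: "0 < a \<Longrightarrow> a \<le> b \<Longrightarrow> G \<psi> a \<le> G \<psi> b"
  using G_mono[of a b] by (cases "a = b") auto

lemma G_bot: "filterlim (G \<psi>) at_bot (at_right 0)"
proof -
  have "((\<lambda>u::real. u) \<longlongrightarrow> 0) (at_right 0)" by (rule tendsto_ident_at)
  moreover have "filterlim (\<lambda>u. - \<psi> u) at_bot (at_right 0)"
    using X_lim0 by (simp add: filterlim_uminus_at_top)
  ultimately have "filterlim (\<lambda>u. u + - \<psi> u) at_bot (at_right 0)"
    using filterlim_tendsto_add_at_bot_iff[of "\<lambda>u::real. u" 0 "at_right 0" "\<lambda>u. - \<psi> u"] by blast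
  then show ?thesis by (simp add: G_def[abs_def])
qed

lemma G_top: "filterlim (G \<psi>) at_top at_top"
proof -
  have "((\<lambda>u. - \<psi> u) \<longlongrightarrow> - 0) at_top" by (intro tendsto_intros X_liminf)
  then have "filterlim (\<lambda>u. - \<psi> u + u) at_top at_top"
    by (rule filterlim_tendsto_add_at_top) (rule filterlim_ident)
  then show ?thesis by (simp add: G_def[abs_def])
qed

lemma G_bij: "bij_betw (G \<psi>) {0<..} UNIV"
  unfolding bij_betw_def
proof (intro conjI)
  show "inj_on (G \<psi>) {0<..}"
    by (rule inj_onI) (metis G_mono greaterThan_iff less_irrefl linorder_neqE)
  have "y \<in> G \<psi> ` {0<..}" for y
  proof -
    have "eventually (\<lambda>u. G \<psi> u < y) (at_right 0)"
      using G_bot by (simp add: filterlim_at_bot_dense)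
    then obtain b where b: "b > 0" "\<And>u. 0 < u \<Longrightarrow> u < b \<Longrightarrow> G \<psi> u < y"
      by (auto simp: eventually_at_right_field)
    define a where "a = b / 2"
    have a: "a > 0" "G \<psi> a < y" using b by (auto simp: a_def)
    have "eventually (\<lambda>u. G \<psi> u > y) at_top"
      using G_top by (simp add: filterlim_at_top_dense)
    then obtain N where N: "\<And>n. n \<ge> N \<Longrightarrow> G \<psi> n > y" by (auto simp: eventually_at_top_linorder)
    define c where "c = max N a"
    have c: "a \<le> c" "G \<psi> c > y" using N by (auto simp: c_def)
    obtain x where "a \<le> x" "x \<le> c" "G \<psi> x = y"
      using IVT[of "G \<psi>" a y c] a c G_isCont by force
    then show "y \<in> G \<psi> ` {0<..}" using a by force
  qed
  then show "G \<psi> ` {0<..} = UNIV" by auto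
qed

definition hinv :: "real \<Rightarrow> real" where "hinv = the_inv_into {0<..} (G \<psi>)"

lemma G_inj: "inj_on (G \<psi>) {0<..}" using G_bij by (simp add: bij_betw_def)

lemma h_pos: "hinv v > 0"
  unfolding hinv_def using G_bij by (intro the_inv_into_into[of _ _ _ "{0<..}", simplified]) (auto simp: bij_betw_def)

lemma G_h: "G \<psi> (hinv v) = v"
  unfolding hinv_def using G_bij by (intro f_the_inv_into_f) (auto simp: bij_betw_def)

lemma h_G: "u > 0 \<Longrightarrow> hinv (G \<psi> u) = u"
  unfolding hinv_def using G_inj by (rule the_inv_into_f_f) simp

lemma h_isCont: "isCont hinv v"
proof -
  have "isCont hinv (G \<psi> (hinv v))"
  proof (rule isCont_inverse_function[of "hinv v / 2" "hinv v" hinv "G \<psi>"])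
    show "0 < hinv v / 2" using h_pos by simp
    fix z assume "\<bar>z - hinv v\<bar> \<le> hinv v / 2"
    then have "z > 0" using h_pos[of v] by linarith
    then show "hinv (G \<psi> z) = z" by (rule h_G)
  next
    fix z assume "\<bar>z - hinv v\<bar> \<le> hinv v / 2"
    then have "z > 0" using h_pos[of v] by linarith
    then show "isCont (G \<psi>) z" by (rule G_isCont)
  qed
  then show ?thesis by (simp add: G_h)
qed

lemma h_deriv: "DERIV hinv v :> inverse (1 - psd (hinv v))"
  by (rule DERIV_inverse_function[where f="G \<psi>" and a="v - 1" and b="v+1"])
     (use G_deriv[OF h_pos] psd_neg[OF h_pos[of v]] G_h h_isCont in auto)

lemma h_mono: "a < b \<Longrightarrow> hinv a < hinv b"
  by (metis G_h G_mono_le h_pos linorder_not_le order_less_irrefl order_le_less_trans)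

lemma h_bot: "(hinv \<longlongrightarrow> 0) at_bot"
proof (rule order_tendstoI)
  fix a :: real assume "a < 0"
  then show "eventually (\<lambda>v. a < hinv v) at_bot"
    using h_pos by (auto intro: always_eventually less_trans)
next
  fix a :: real assume a: "0 < a"
  show "eventually (\<lambda>v. hinv v < a) at_bot"
    using eventually_le_at_bot[of "G \<psi> a - 1"]
  proof eventually_elim
    case (elim v)
    show ?case
    proof (rule ccontr)
      assume "\<not> hinv v < a"
      then have "G \<psi> a \<le> G \<psi> (hinv v)" using a by (intro G_mono_le) auto
      with elim G_h[of v] show False by simp
    qed
  qed
qed

lemma h_top: "filterlim hinv at_top at_top"
  unfolding filterlim_at_top
proof
  fix Z :: real
  define Z' where "Z' = max Z 1"
  show "eventually (\<lambda>v. Z \<le> hinv v) at_top"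
    using eventually_ge_at_top[of "G \<psi> Z'"]
  proof eventually_elim
    case (elim v)
    show ?case
    proof (rule ccontr)
      assume "\<not> Z \<le> hinv v"
      then have "hinv v < Z'" by (simp add: Z'_def)
      then have "G \<psi> (hinv v) < G \<psi> Z'" by (intro G_mono h_pos)
      with elim G_h[of v] show False by simp
    qed
  qed
qed

lemma Phi_eq: "Phi_U \<psi> v = - psd (hinv v) / (1 - psd (hinv v))"
  unfolding Phi_U_def Let_def hinv_def[symmetric]
  using DERIV_imp_deriv[OF psd_deriv[OF h_pos]] by simp

lemma Phi_bounds: "0 < Phi_U \<psi> v" "Phi_U \<psi> v < 1"
proof -
  have p: "psd (hinv v) < 0" using psd_neg[OF h_pos[of v]] .
  have q: "0 < 1 - psd (hinv v)" using p by simp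
  show "0 < Phi_U \<psi> v" using divide_pos_pos[OF _ q, of "- psd (hinv v)"] p by (simp add: Phi_eq)
  have "- psd (hinv v) / (1 - psd (hinv v)) < 1" by (subst pos_divide_less_eq[OF q]) simp
  then show "Phi_U \<psi> v < 1" by (simp only: Phi_eq)
qed

lemma one_minus_Phi: "1 - Phi_U \<psi> v = inverse (1 - psd (hinv v))"
  using psd_neg[OF h_pos[of v]] by (simp add: Phi_eq field_simps)

lemma Phi_cont: "continuous_on UNIV (Phi_U \<psi>)"
proof -
  have ch: "continuous_on UNIV hinv"
    by (intro continuous_at_imp_continuous_on ballI h_isCont)
  have "continuous_on UNIV (\<lambda>v. psd (hinv v))"
    by (rule continuous_on_compose2[OF psd_cont ch]) (auto intro: h_pos)
  moreover have nz: "1 - psd (hinv v) \<noteq> 0" for v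
  proof -
    have "psd (hinv v) < 0" by (rule psd_neg[OF h_pos])
    then show "1 - psd (hinv v) \<noteq> 0" by simp
  qed
  ultimately have "continuous_on UNIV (\<lambda>v. - psd (hinv v) / (1 - psd (hinv v)))"
    by (intro continuous_intros) auto
  then show ?thesis by (simp add: Phi_eq[abs_def])
qed

lemma zm_Phi: "set_integrable lborel {..v} (\<lambda>x. 1 - Phi_U \<psi> x) \<and>
   (LINT x:{..v}|lborel. 1 - Phi_U \<psi> x) = hinv v"
proof -
  have "set_integrable lborel {..v} (\<lambda>x. 1 - Phi_U \<psi> x) \<and>
   (LINT x:{..v}|lborel. 1 - Phi_U \<psi> x) = hinv v - 0"
  proof (rule FTC_left)
    show "continuous_on UNIV (\<lambda>x. 1 - Phi_U \<psi> x)" using Phi_cont by (intro continuous_intros)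
    show "DERIV hinv x :> 1 - Phi_U \<psi> x" for x using h_deriv by (simp add: one_minus_Phi)
    show "0 \<le> 1 - Phi_U \<psi> x" for x using Phi_bounds(2)[of x] by simp
    show "(hinv \<longlongrightarrow> 0) at_bot" by (rule h_bot)
    show "(hinv \<longlongrightarrow> hinv v) (at_left v)"
      using h_isCont[of v] by (simp add: isCont_def filterlim_at_split)
  qed
  then show ?thesis by simp
qed

lemma zp_Phi: "set_integrable lborel {v..} (Phi_U \<psi>) \<and>
   (LINT x:{v..}|lborel. Phi_U \<psi> x) = \<psi> (hinv v)"
proof -
  have D: "DERIV (\<lambda>x. - \<psi> (hinv x)) x :> Phi_U \<psi> x" for x
  proof -
    have "DERIV (\<lambda>x. - \<psi> (hinv x)) x :> - (psd (hinv x) * inverse (1 - psd (hinv x)))"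
      by (intro DERIV_minus DERIV_chain2[OF psd_deriv[OF h_pos] h_deriv])
    then show ?thesis by (simp add: Phi_eq divide_inverse)
  qed
  have "set_integrable lborel {v..} (Phi_U \<psi>) \<and>
   (LINT x:{v..}|lborel. Phi_U \<psi> x) = 0 - (- \<psi> (hinv v))"
  proof (rule FTC_right[where F="\<lambda>x. - \<psi> (hinv x)"])
    show "continuous_on UNIV (Phi_U \<psi>)" by (rule Phi_cont)
    show "DERIV (\<lambda>x. - \<psi> (hinv x)) x :> Phi_U \<psi> x" for x by (rule D)
    show "0 \<le> Phi_U \<psi> x" for x using Phi_bounds(1)[of x] by simp
    have "((\<lambda>x. \<psi> (hinv x)) \<longlongrightarrow> 0) at_top"
      by (rule filterlim_compose[OF X_liminf h_top])
    then show "((\<lambda>x. - \<psi> (hinv x)) \<longlongrightarrow> 0) at_top"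
      using tendsto_minus by fastforce
    show "((\<lambda>x. - \<psi> (hinv x)) \<longlongrightarrow> - \<psi> (hinv v)) (at_right v)"
      using DERIV_isCont[OF D[of v]] by (simp add: isCont_def filterlim_at_split)
  qed
  then show ?thesis by simp
qed

lemma Phi_in_Y: "Phi_U \<psi> \<in> Y_U"
proof -
  have e: "hinv 0 = \<psi> (hinv 0)" using G_h[of 0] by (simp add: G_def)
  show ?thesis unfolding Y_U_def
    using Phi_cont Phi_bounds zm_Phi[of 0] zp_Phi[of 0] e by auto
qed

lemma Psi_Phi: "Psi_U (Phi_U \<psi>) = \<psi>"
proof
  fix u
  have zm: "zeta_minus (Phi_U \<psi>) = hinv" using zm_Phi by (simp add: zeta_minus_def fun_eq_iff)
  have zp: "zeta_plus (Phi_U \<psi>) v = \<psi> (hinv v)" for v using zp_Phi by (simp add: zeta_plus_def)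
  have inj: "inj hinv" by (rule injI) (metis h_mono less_irrefl linorder_neqE)
  show "Psi_U (Phi_U \<psi>) u = \<psi> u"
  proof (cases "u > 0")
    case True
    have "the_inv_into UNIV hinv u = G \<psi> u"
      by (rule the_inv_into_f_eq[OF inj]) (use h_G True in auto)
    then show ?thesis using True by (simp add: Psi_U_def zm zp h_G)
  next
    case False then show ?thesis by (simp add: Psi_U_def X_zero)
  qed
qed

end

theorem proposition4p4:
  shows "(\<forall>\<psi>\<in>X_U. bij_betw (G \<psi>) {0<..} UNIV)
       \<and> (\<forall>\<rho>\<in>Y_U. bij_betw (zeta_minus \<rho>) UNIV {0<..} \<and> bij_betw (zeta_plus \<rho>) UNIV {0<..})
       \<and> bij_betw Phi_U X_U Y_U
       \<and> (\<forall>\<rho>\<in>Y_U. Psi_U \<rho> \<in> X_U \<and> Phi_U (Psi_U \<rho>) = \<rho>)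
       \<and> (\<forall>\<psi>\<in>X_U. Psi_U (Phi_U \<psi>) = \<psi>)"
proof (intro conjI ballI)
  show "bij_betw (G \<psi>) {0<..} UNIV" if "\<psi> \<in> X_U" for \<psi> using G_bij[OF that] .
  show "bij_betw (zeta_minus \<rho>) UNIV {0<..}" if "\<rho> \<in> Y_U" for \<rho> using zm_bij[OF that] .
  show "bij_betw (zeta_plus \<rho>) UNIV {0<..}" if "\<rho> \<in> Y_U" for \<rho> using zp_bij[OF that] .
  show "Psi_U \<rho> \<in> X_U" if "\<rho> \<in> Y_U" for \<rho> using Psi_in_X[OF that] .
  show "Phi_U (Psi_U \<rho>) = \<rho>" if "\<rho> \<in> Y_U" for \<rho> using Phi_Psi[OF that] .
  show "Psi_U (Phi_U \<psi>) = \<psi>" if "\<psi> \<in> X_U" for \<psi> using Psi_Phi[OF that] .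
  show "bij_betw Phi_U X_U Y_U"
    by (rule bij_betw_byWitness[where f'=Psi_U])
       (auto intro: Psi_Phi Phi_Psi Phi_in_Y Psi_in_X)
qed

end
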